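(* Assume A2, let $x\in\mathcal I$, suppose the $x$-threshold word $\pi$ exists, and let $n\ge 1$. Then: (1) if $x\le y_{10^{n-1}}$ then $0^n$ does not occur as a factor of $\pi^\omega$; (2) if $x\ge y_{010^{n-1}}$ then $10^{n-1}1$ does not occur as a factor of $\pi^\omega$; (3) if $x\ge y_{01^{n-1}}$ then $1^n$ does not occur as a factor of $\pi^\omega$; (4) if $x\le y_{101^{n-1}}$ then $01^{n-1}0$ does not occur as a factor of $\pi^\omega$. (Here $0^0=1^0=\epsilon$.)
   Context: Words are finite strings over $\{0,1\}$; $\epsilon$ is the empty word, $w_k$ the $k$-th letter, $w^\omega$ the infinite repetition of $w$. Let $\mathcal I\subseteq\mathbb R$ be an interval and $\phi_0,\phi_1:\mathcal I\to\mathcal I$. For a word $w$ put $\phi_w:=\phi_{w_{|w|}}\circ\cdots\circ\phi_{w_1}$ (the first letter is applied first), $\phi_\epsilon=\mathrm{id}$. Assumption A2: for all $x<y$ in $\mathcal I$ and $k\in\{0,1\}$, $\phi_k(x)<\phi_k(y)$ and $\phi_k(y)-\phi_k(x)<y-x$; moreover $\phi_0,\phi_1$ have fixed points $y_0,y_1\in\mathcal I$ with $y_1<y_0$. Under A2, for every non-empty word $w$ the map $\phi_w$ has a unique fixed point in $\mathcal I$, denoted $y_w$. The $x$-threshold orbit is the sequence $(x_k)_{k\ge1}$ with $x_1=\phi_1(x)$ and $x_{k+1}=\phi_1(x_k)$ if $x_k\ge x$, $x_{k+1}=\phi_0(x_k)$ if $x_k<x$. The $x$-threshold word is the shortest (finite,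 non-empty) word $\pi$ such that $x_{k+1}=\phi_{(\pi^\omega)_k}(x_k)$ for all $k\ge1$, when such a word exists. *)

theory Defs
  imports "HOL-Analysis.Analysis"
begin

text \<open>Words over {0,1} are lists of naturals with letters in {0,1}.
  The maps are given as phi :: nat => real => real, phi 0 and phi 1 being the two maps.\<close>

definition word01 :: "nat list \<Rightarrow> bool" where
  "word01 w \<longleftrightarrow> set w \<subseteq> {0, 1}"

text \<open>phi_w: first letter applied first.\<close>
definition phiw :: "(nat \<Rightarrow> real \<Rightarrow> real) \<Rightarrow> nat list \<Rightarrow> real \<Rightarrow> real" where
  "phiw phi w = fold phi w"

definition A2 :: "real set \<Rightarrow> (nat \<Rightarrow> real \<Rightarrow> real) \<Rightarrow> bool" where
  "A2 I phi \<longleftrightarrow> is_interval I \<and>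
     (\<forall>k\<in>{0,1}. \<forall>z\<in>I. phi k z \<in> I) \<and>
     (\<forall>k\<in>{0,1}. \<forall>a\<in>I. \<forall>b\<in>I. a < b \<longrightarrow> phi k a < phi k b \<and> phi k b - phi k a < b - a) \<and>
     (\<exists>y0\<in>I. \<exists>y1\<in>I. phi 0 y0 = y0 \<and> phi 1 y1 = y1 \<and> y1 < y0)"

definition fixw :: "real set \<Rightarrow> (nat \<Rightarrow> real \<Rightarrow> real) \<Rightarrow> nat list \<Rightarrow> real" where
  "fixw I phi w = (THE y. y \<in> I \<and> phiw phi w y = y)"

text \<open>Threshold orbit: thr_orbit phi x k = x_k for k >= 1 (index 0 gives x itself,
  which makes x_1 = phi 1 x automatic).\<close>
fun thr_orbit :: "(nat \<Rightarrow> real \<Rightarrow> real) \<Rightarrow> real \<Rightarrow> nat \<Rightarrow> real" where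
  "thr_orbit phi x 0 = x"
| "thr_orbit phi x (Suc k) =
     (if thr_orbit phi x k \<ge> x then phi 1 (thr_orbit phi x k) else phi 0 (thr_orbit phi x k))"

text \<open>The k-th letter (1-indexed) of w^omega.\<close>
definition omega_letter :: "nat list \<Rightarrow> nat \<Rightarrow> nat" where
  "omega_letter w k = w ! ((k - 1) mod length w)"

definition codes_orbit :: "(nat \<Rightarrow> real \<Rightarrow> real) \<Rightarrow> real \<Rightarrow> nat list \<Rightarrow> bool" where
  "codes_orbit phi x w \<longleftrightarrow> w \<noteq> [] \<and> word01 w \<and>
     (\<forall>k\<ge>1. thr_orbit phi x (Suc k) = phi (omega_letter w k) (thr_orbit phi x k))"

definition threshold_word :: "(nat \<Rightarrow> real \<Rightarrow> real) \<Rightarrow> real \<Rightarrow> nat list \<Rightarrow> bool" where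
  "threshold_word phi x p \<longleftrightarrow> codes_orbit phi x p \<and>
     (\<forall>w. codes_orbit phi x w \<longrightarrow> length p \<le> length w)"

definition factor_omega :: "nat list \<Rightarrow> nat list \<Rightarrow> bool" where
  "factor_omega u w \<longleftrightarrow> (\<exists>i. \<forall>j<length u. u ! j = w ! ((i + j) mod length w))"

end

theory Submission
  imports Defs
begin

lemma A2_interval: "A2 I phi \<Longrightarrow> is_interval I" by (simp add: A2_def)
lemma A2_in: "A2 I phi \<Longrightarrow> k \<in> {0,1} \<Longrightarrow> z \<in> I \<Longrightarrow> phi k z \<in> I"
  unfolding A2_def by blast
lemma A2_mono: "A2 I phi \<Longrightarrow> k \<in> {0,1} \<Longrightarrow> a \<in> I \<Longrightarrow> b \<in> I \<Longrightarrow> a < b \<Longrightarrow> phi k a < phi k b"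
  unfolding A2_def by blast
lemma A2_contr: "A2 I phi \<Longrightarrow> k \<in> {0,1} \<Longrightarrow> a \<in> I \<Longrightarrow> b \<in> I \<Longrightarrow> a < b \<Longrightarrow> phi k b - phi k a < b - a"
  unfolding A2_def by blast
lemma A2_fix: "A2 I phi \<Longrightarrow> \<exists>y0\<in>I. \<exists>y1\<in>I. phi 0 y0 = y0 \<and> phi 1 y1 = y1 \<and> y1 < y0"
  unfolding A2_def by blast

lemma phiw_Nil[simp]: "phiw phi [] z = z" by (simp add: phiw_def)
lemma phiw_Cons[simp]: "phiw phi (c#w) z = phiw phi w (phi c z)" by (simp add: phiw_def)
lemma phiw_snoc: "phiw phi (w@[c]) z = phi c (phiw phi w z)" by (simp add: phiw_def)

lemma phiw_in: "A2 I phi \<Longrightarrow> set w \<subseteq> {0,1} \<Longrightarrow> z \<in> I \<Longrightarrow> phiw phi w z \<in> I"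
proof (induction w arbitrary: z)
  case (Cons c w) then show ?case using A2_in[of I phi c z] by simp
qed simp

lemma phiw_mono: "A2 I phi \<Longrightarrow> set w \<subseteq> {0,1} \<Longrightarrow> a \<in> I \<Longrightarrow> b \<in> I \<Longrightarrow> a < b \<Longrightarrow> phiw phi w a < phiw phi w b"
proof (induction w arbitrary: a b)
  case (Cons c w) then show ?case using A2_in[of I phi c] A2_mono[of I phi c a b] by simp
qed simp

lemma phiw_le: "A2 I phi \<Longrightarrow> set w \<subseteq> {0,1} \<Longrightarrow> a \<in> I \<Longrightarrow> b \<in> I \<Longrightarrow> a \<le> b \<Longrightarrow> phiw phi w a \<le> phiw phi w b"
  using phiw_mono[of I phi w a b] by (cases "a = b") auto

lemma phiw_nonexp: "A2 I phi \<Longrightarrow> set w \<subseteq> {0,1} \<Longrightarrow> a \<in> I \<Longrightarrow> b \<in> I \<Longrightarrow> a \<le> b \<Longrightarrow> phiw phi w b - phiw phi w a \<le> b - a"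
proof (induction w arbitrary: a b)
  case (Cons c w)
  show ?case
  proof (cases "a = b")
    case False
    then have ab: "a < b" using Cons by simp
    have c: "c \<in> {0,1}" using Cons by simp
    have "phi c a < phi c b" "phi c b - phi c a < b - a"
      using A2_mono[OF Cons.prems(1) c _ _ ab] A2_contr[OF Cons.prems(1) c _ _ ab] Cons.prems by auto
    moreover have "phiw phi w (phi c b) - phiw phi w (phi c a) \<le> phi c b - phi c a"
      using Cons.IH[of "phi c a" "phi c b"] Cons.prems A2_in[OF Cons.prems(1) c] calculation by auto
    ultimately show ?thesis by simp
  qed simp
qed simp

lemma phiw_contr: "A2 I phi \<Longrightarrow> set w \<subseteq> {0,1} \<Longrightarrow> w \<noteq> [] \<Longrightarrow> a \<in> I \<Longrightarrow> b \<in> I \<Longrightarrow> a < b \<Longrightarrow> phiw phi w b - phiw phi w a < b - a"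
proof (cases w)
  case (Cons c w')
  assume A: "A2 I phi" and s: "set w \<subseteq> {0,1}" and I: "a \<in> I" "b \<in> I" and ab: "a < b"
  have c: "c \<in> {0,1}" and s': "set w' \<subseteq> {0,1}" using s Cons by auto
  have "phi c a < phi c b" "phi c b - phi c a < b - a"
    using A2_mono[OF A c I ab] A2_contr[OF A c I ab] by auto
  moreover have "phiw phi w' (phi c b) - phiw phi w' (phi c a) \<le> phi c b - phi c a"
    using phiw_nonexp[OF A s' A2_in[OF A c I(1)] A2_in[OF A c I(2)]] calculation by auto
  ultimately show ?thesis using Cons by simp
qed simp

lemma phiw_abs: "A2 I phi \<Longrightarrow> set w \<subseteq> {0,1} \<Longrightarrow> a \<in> I \<Longrightarrow> b \<in> I \<Longrightarrow> \<bar>phiw phi w b - phiw phi w a\<bar> \<le> \<bar>b - a\<bar>"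
proof (cases "a \<le> b")
  case True
  assume A: "A2 I phi" "set w \<subseteq> {0,1}" "a \<in> I" "b \<in> I"
  then show ?thesis using True phiw_nonexp[of I phi w a b] phiw_le[of I phi w a b] by auto
next
  case False
  assume A: "A2 I phi" "set w \<subseteq> {0,1}" "a \<in> I" "b \<in> I"
  then show ?thesis using False phiw_nonexp[of I phi w b a] phiw_le[of I phi w b a] by auto
qed

lemma phiw_cont: "A2 I phi \<Longrightarrow> set w \<subseteq> {0,1} \<Longrightarrow> continuous_on I (phiw phi w)"
  unfolding continuous_on_iff
proof (intro ballI allI impI)
  fix a e assume A: "A2 I phi" "set w \<subseteq> {0,1}" "a \<in> I" "(e::real) > 0"
  show "\<exists>d>0. \<forall>x'\<in>I. dist x' a < d \<longrightarrow> dist (phiw phi w x') (phiw phi w a) < e"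
    using A phiw_abs[of I phi w a] by (intro exI[of _ e]) (auto simp: dist_real_def intro: le_less_trans)
qed

lemma fix_ge: "A2 I phi \<Longrightarrow> set w \<subseteq> {0,1} \<Longrightarrow> y \<in> I \<Longrightarrow> phiw phi w y = y \<Longrightarrow> z \<in> I \<Longrightarrow> z \<le> y \<Longrightarrow> z \<le> phiw phi w z"
  using phiw_nonexp[of I phi w z y] by auto

lemma fix_le: "A2 I phi \<Longrightarrow> set w \<subseteq> {0,1} \<Longrightarrow> y \<in> I \<Longrightarrow> phiw phi w y = y \<Longrightarrow> z \<in> I \<Longrightarrow> y \<le> z \<Longrightarrow> phiw phi w z \<le> z"
  using phiw_nonexp[of I phi w y z] by auto

lemma fix_unique: "A2 I phi \<Longrightarrow> set w \<subseteq> {0,1} \<Longrightarrow> w \<noteq> [] \<Longrightarrow> a \<in> I \<Longrightarrow> b \<in> I \<Longrightarrow> phiw phi w a = a \<Longrightarrow> phiw phi w b = b \<Longrightarrow> a = b"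
  using phiw_contr[of I phi w a b] phiw_contr[of I phi w b a] by (cases a b rule: linorder_cases) auto

lemma phiw_box: "A2 I phi \<Longrightarrow> set w \<subseteq> {0,1} \<Longrightarrow> y0 \<in> I \<Longrightarrow> y1 \<in> I \<Longrightarrow> phi 0 y0 = y0 \<Longrightarrow> phi 1 y1 = y1
  \<Longrightarrow> z \<in> I \<Longrightarrow> y1 \<le> z \<Longrightarrow> z \<le> y0 \<Longrightarrow> y1 \<le> phiw phi w z \<and> phiw phi w z \<le> y0"
proof (induction w arbitrary: z)
  case (Cons c w)
  have c: "c = 0 \<or> c = 1" using Cons by auto
  have "y1 \<le> phi c z \<and> phi c z \<le> y0"
  proof (cases "c = 0")
    case True
    then show ?thesis using fix_ge[of I phi "[0]" y0 z] phiw_le[of I phi "[0]" z y0] Cons.prems by auto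
  next
    case False
    then have "c = 1" using c by auto
    then show ?thesis using fix_le[of I phi "[1]" y1 z] phiw_le[of I phi "[1]" y1 z] Cons.prems by auto
  qed
  then show ?case using Cons.IH[of "phi c z"] Cons.prems A2_in[of I phi c z] c by auto
qed simp

lemma fix_exists: "A2 I phi \<Longrightarrow> set w \<subseteq> {0,1} \<Longrightarrow> \<exists>y\<in>I. phiw phi w y = y"
proof -
  assume A: "A2 I phi" and s: "set w \<subseteq> {0,1}"
  obtain y0 y1 where y: "y0 \<in> I" "y1 \<in> I" "phi 0 y0 = y0" "phi 1 y1 = y1" "y1 < y0"
    using A2_fix[OF A] by blast
  have sub: "{y1..y0} \<subseteq> I" using mem_is_interval_1_I[OF A2_interval[OF A] y(2) y(1)] by auto
  have cont: "continuous_on {y1..y0} (\<lambda>z. phiw phi w z - z)"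
    by (intro continuous_intros continuous_on_subset[OF phiw_cont[OF A s] sub])
  have "(\<lambda>z. phiw phi w z - z) y0 \<le> 0" "0 \<le> (\<lambda>z. phiw phi w z - z) y1"
    using phiw_box[OF A s y(1-4), of y0] phiw_box[OF A s y(1-4), of y1] y by auto
  from IVT2'[OF this _ cont] y(5) obtain z where "y1 \<le> z" "z \<le> y0" "phiw phi w z - z = 0" by auto
  then show ?thesis using sub by auto
qed

lemma fixw_prop: "A2 I phi \<Longrightarrow> set w \<subseteq> {0,1} \<Longrightarrow> w \<noteq> [] \<Longrightarrow> fixw I phi w \<in> I \<and> phiw phi w (fixw I phi w) = fixw I phi w"
  unfolding fixw_def
  apply (rule theI')
  using fix_exists[of I phi w] fix_unique[of I phi w] by blast


lemma orbit_in: "A2 I phi \<Longrightarrow> x \<in> I \<Longrightarrow> thr_orbit phi x k \<in> I"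
  by (induction k) (auto intro: A2_in)

lemma G:
  assumes A: "A2 I phi" and sI: "\<And>k. s k \<in> I"
    and s0: "\<And>k. s (Suc k) = phi 0 (s k)" and s1: "\<And>k. s (Suc k) = phi 1 (s k)"
  shows False
proof -
  obtain y0 y1 where y: "y0 \<in> I" "y1 \<in> I" "phi 0 y0 = y0" "phi 1 y1 = y1" "y1 < y0"
    using A2_fix[OF A] by blast
  have p0: "phiw phi [0] z = phi 0 z" for z by simp
  have "\<exists>L\<in>I. s \<longlonglongrightarrow> L"
  proof (cases "s 0 \<le> y0")
    case True
    have b: "s k \<le> y0" for k
    proof (induction k)
      case (Suc k) then show ?case using s0[of k] phiw_le[OF A _ sI y(1), of "[0]" k] y(3) by simp
    qed (use True in auto)
    have "s k \<le> s (Suc k)" for k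
      using fix_ge[OF A _ y(1) _ sI b, of "[0]" k] y(3) s0[of k] by simp
    then have inc: "incseq s" by (rule incseq_SucI)
    have bdd: "bdd_above (range s)" using b by (auto intro!: bdd_aboveI[of _ y0])
    from LIMSEQ_incseq_SUP[OF bdd inc] have lim: "s \<longlonglongrightarrow> (SUP i. s i)" .
    have "s 0 \<le> (SUP i. s i)" "(SUP i. s i) \<le> y0"
      using cSUP_upper[OF _ bdd, of 0] cSUP_least[of UNIV s y0] b by auto
    then have "(SUP i. s i) \<in> I" using mem_is_interval_1_I[OF A2_interval[OF A] sI y(1)] by blast
    then show ?thesis using lim by blast
  next
    case False
    have b: "y0 \<le> s k" for k
    proof (induction k)
      case (Suc k) then show ?case using s0[of k] phiw_le[OF A _ y(1) sI, of "[0]" k] y(3) by simp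
    qed (use False in auto)
    have "s (Suc k) \<le> s k" for k
      using fix_le[OF A _ y(1) _ sI b, of "[0]" k] y(3) s0[of k] by simp
    then have dec: "decseq s" by (rule decseq_SucI)
    have bdd: "bdd_below (range s)" using b by (auto intro!: bdd_belowI[of _ y0])
    from LIMSEQ_decseq_INF[OF bdd dec] have lim: "s \<longlonglongrightarrow> (INF i. s i)" .
    have "(INF i. s i) \<le> s 0" "y0 \<le> (INF i. s i)"
      using cINF_lower[OF bdd, of 0] cINF_greatest[of UNIV y0 s] b by auto
    then have "(INF i. s i) \<in> I" using mem_is_interval_1_I[OF A2_interval[OF A] y(1) sI] by blast
    then show ?thesis using lim by blast
  qed
  then obtain L where L: "L \<in> I" "s \<longlonglongrightarrow> L" by blast
  have fixc: "phi c L = L" if c: "c \<in> {0,1}" and sc: "\<And>k. s (Suc k) = phi c (s k)" for c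
  proof -
    have "set [c] \<subseteq> {0,1}" using c by simp
    from phiw_cont[OF A this] have "continuous_on I (phiw phi [c])" .
    moreover have "phiw phi [c] = phi c" by (rule ext) simp
    ultimately have "continuous_on I (phi c)" by simp
    from continuous_on_tendsto_compose[OF this L(2) L(1)] sI
    have "(\<lambda>k. phi c (s k)) \<longlonglongrightarrow> phi c L" by simp
    then have "(\<lambda>k. s (Suc k)) \<longlonglongrightarrow> phi c L" using sc by simp
    moreover have "(\<lambda>k. s (Suc k)) \<longlonglongrightarrow> L" using L(2) by (rule LIMSEQ_Suc)
    ultimately show ?thesis using LIMSEQ_unique by blast
  qed
  have "L = y0" using fix_unique[OF A, of "[0]" L y0] fixc[of 0] s0 L y by simp
  moreover have "L = y1" using fix_unique[OF A, of "[1]" L y1] fixc[of 1] s1 L y by simp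
  ultimately show False using y(5) by simp
qed

lemma last_before:
  assumes "P j" "j \<le> (i::nat)"
  shows "\<exists>m. j \<le> m \<and> m \<le> i \<and> P m \<and> (\<forall>t. m < t \<and> t \<le> i \<longrightarrow> \<not> P t)"
  using assms
proof (induction i)
  case 0 then show ?case by auto
next
  case (Suc i)
  show ?case
  proof (cases "P (Suc i)")
    case True then show ?thesis using Suc by auto
  next
    case False
    then have "j \<le> i" using Suc by (cases "j = Suc i") auto
    from Suc.IH[OF Suc.prems(1) this] obtain m where "j \<le> m \<and> m \<le> i \<and> P m \<and> (\<forall>t. m < t \<and> t \<le> i \<longrightarrow> \<not> P t)" by blast
    then show ?thesis using False by (intro exI[of _ m]) (auto simp: le_Suc_eq)
  qed
qed

lemma rep_snoc: "replicate (Suc r) c = replicate r c @ [c]"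
  by (simp add: replicate_append_same)

lemma run0: "(\<And>t. t < r \<Longrightarrow> thr_orbit phi x (j+t) < x) \<Longrightarrow>
   thr_orbit phi x (j+r) = phiw phi (replicate r 0) (thr_orbit phi x j)"
proof (induction r)
  case (Suc r)
  have "thr_orbit phi x (j + Suc r) = phi 0 (thr_orbit phi x (j+r))"
    using Suc.prems[of r] by simp
  also have "\<dots> = phiw phi (replicate (Suc r) 0) (thr_orbit phi x j)"
    using Suc by (simp only: rep_snoc phiw_snoc)
  finally show ?case .
qed simp

lemma run1: "(\<And>t. t < r \<Longrightarrow> x \<le> thr_orbit phi x (j+t)) \<Longrightarrow>
   thr_orbit phi x (j+r) = phiw phi (replicate r 1) (thr_orbit phi x j)"
proof (induction r)
  case (Suc r)
  have "thr_orbit phi x (j + Suc r) = phi 1 (thr_orbit phi x (j+r))"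
    using Suc.prems[of r] by simp
  also have "\<dots> = phiw phi (replicate (Suc r) 1) (thr_orbit phi x j)"
    using Suc by (simp only: rep_snoc phiw_snoc)
  finally show ?case .
qed simp


lemma tw_basic: "threshold_word phi x p \<Longrightarrow> p \<noteq> [] \<and> set p \<subseteq> {0,1}"
  by (simp add: threshold_word_def codes_orbit_def word01_def)

lemma tw_step: "threshold_word phi x p \<Longrightarrow> 1 \<le> k \<Longrightarrow>
   thr_orbit phi x (Suc k) = phi (omega_letter p k) (thr_orbit phi x k)"
  unfolding threshold_word_def codes_orbit_def by blast

lemma tw_letter01: "threshold_word phi x p \<Longrightarrow> omega_letter p k \<in> {0,1}"
proof -
  assume tw: "threshold_word phi x p"
  from tw_basic[OF tw] have "p \<noteq> []" "set p \<subseteq> {0,1}" by auto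
  then have "p ! ((k - 1) mod length p) \<in> set p" by (intro nth_mem) auto
  then show ?thesis using \<open>set p \<subseteq> {0,1}\<close> by (auto simp: omega_letter_def)
qed

lemma tw_min: "threshold_word phi x p \<Longrightarrow> codes_orbit phi x w \<Longrightarrow> length p \<le> length w"
  unfolding threshold_word_def by blast

lemma factor_letter: "factor_omega u p \<Longrightarrow> p \<noteq> [] \<Longrightarrow> \<exists>k\<ge>1. \<forall>j<length u. omega_letter p (k+j) = u!j"
proof -
  assume "factor_omega u p" "p \<noteq> []"
  then obtain i where i: "\<forall>j<length u. u ! j = p ! ((i + j) mod length p)" unfolding factor_omega_def by blast
  show ?thesis
    by (rule exI[of _ "Suc i"]) (use i in \<open>auto simp: omega_letter_def\<close>)
qed

lemma lo_word:
  assumes A: "A2 I phi" and x: "x \<in> I" and tw: "threshold_word phi x p"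
    and y1: "y1 \<in> I" "phi 1 y1 = y1" and lo: "x \<le> y1"
  shows "p = [1]"
proof -
  have px: "x \<le> phi 1 x" using fix_ge[OF A _ y1(1) _ x lo, of "[1]"] y1 by simp
  have ge: "x \<le> thr_orbit phi x k" for k
  proof (induction k)
    case (Suc k)
    have "phi 1 x \<le> phi 1 (thr_orbit phi x k)"
      using phiw_le[OF A _ x orbit_in[OF A x] Suc, of "[1]"] by simp
    then show ?case using Suc px by simp
  qed simp
  have "codes_orbit phi x [1]" unfolding codes_orbit_def word01_def omega_letter_def using ge by simp
  then have "length p \<le> 1" using tw_min[OF tw] by fastforce
  with tw_basic[OF tw] obtain c where p: "p = [c]" "c \<in> {0,1}" by (cases p) auto
  have ol: "omega_letter p k = c" for k using p by (simp add: omega_letter_def)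
  show ?thesis
  proof (rule ccontr)
    assume "p \<noteq> [1]" then have c0: "c = 0" using p by auto
    let ?s = "\<lambda>k. thr_orbit phi x (Suc k)"
    show False
    proof (rule G[OF A, of ?s])
      show "?s k \<in> I" for k using orbit_in[OF A x] .
      show "?s (Suc k) = phi 0 (?s k)" for k using tw_step[OF tw, of "Suc k"] ol c0 by simp
      show "?s (Suc k) = phi 1 (?s k)" for k using ge[of "Suc k"] by simp
    qed
  qed
qed

lemma hi_word:
  assumes A: "A2 I phi" and x: "x \<in> I" and tw: "threshold_word phi x p"
    and y: "y0 \<in> I" "y1 \<in> I" "phi 0 y0 = y0" "phi 1 y1 = y1" "y1 < y0" and hi: "y0 \<le> x"
  shows "p = [0]"
proof -
  have px0: "phi 0 x \<le> x" using fix_le[OF A _ y(1) _ x hi, of "[0]"] y by simp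
  have px1: "phi 1 x < x" using A2_contr[OF A _ y(2) x, of 1] y hi by simp
  have lt: "thr_orbit phi x (Suc k) < x" for k
  proof (induction k)
    case 0 then show ?case using px1 by simp
  next
    case (Suc k)
    have "phi 0 (thr_orbit phi x (Suc k)) < phi 0 x"
      using A2_mono[OF A _ orbit_in[OF A x] x Suc, of 0] by simp
    then show ?case using Suc px0 by simp
  qed
  have "codes_orbit phi x [0]" unfolding codes_orbit_def word01_def omega_letter_def
  proof (intro conjI allI impI)
    fix k :: nat assume "1 \<le> k"
    then obtain k' where "k = Suc k'" by (cases k) auto
    then show "thr_orbit phi x (Suc k) = phi ([0] ! ((k - 1) mod length [0])) (thr_orbit phi x k)"
      using lt[of k'] by simp
  qed auto
  then have "length p \<le> 1" using tw_min[OF tw] by fastforce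
  with tw_basic[OF tw] obtain c where p: "p = [c]" "c \<in> {0,1}" by (cases p) auto
  have ol: "omega_letter p k = c" for k using p by (simp add: omega_letter_def)
  show ?thesis
  proof (rule ccontr)
    assume "p \<noteq> [0]" then have c1: "c = 1" using p by auto
    let ?s = "\<lambda>k. thr_orbit phi x (Suc k)"
    show False
    proof (rule G[OF A, of ?s])
      show "?s k \<in> I" for k using orbit_in[OF A x] .
      show "?s (Suc k) = phi 1 (?s k)" for k using tw_step[OF tw, of "Suc k"] ol c1 by simp
      show "?s (Suc k) = phi 0 (?s k)" for k using lt[of k] by simp
    qed
  qed
qed

lemma stay_above:
  assumes A: "A2 I phi" and x: "x \<in> I" and pc: "\<And>c. c \<in> {0,1} \<Longrightarrow> x \<le> phi c x"
  shows "set w \<subseteq> {0,1} \<Longrightarrow> z \<in> I \<Longrightarrow> x < z \<Longrightarrow> x < phiw phi w z"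
proof (induction w arbitrary: z)
  case (Cons c w)
  have c: "c \<in> {0,1}" using Cons by simp
  have "phi c x < phi c z" using A2_mono[OF A c x Cons.prems(2,3)] .
  then have "x < phi c z" using pc[OF c] by simp
  then show ?case using Cons A2_in[OF A c Cons.prems(2)] by simp
qed simp

lemma stay_below:
  assumes A: "A2 I phi" and x: "x \<in> I" and pc: "\<And>c. c \<in> {0,1} \<Longrightarrow> phi c x \<le> x"
  shows "set w \<subseteq> {0,1} \<Longrightarrow> z \<in> I \<Longrightarrow> z < x \<Longrightarrow> phiw phi w z < x"
proof (induction w arbitrary: z)
  case (Cons c w)
  have c: "c \<in> {0,1}" using Cons by simp
  have "phi c z < phi c x" using A2_mono[OF A c Cons.prems(2) x Cons.prems(3)] .
  then have "phi c z < x" using pc[OF c] by simp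
  then show ?case using Cons A2_in[OF A c Cons.prems(2)] by simp
qed simp

lemma E1:
  assumes A: "A2 I phi" and x: "x \<in> I"
    and y: "y0 \<in> I" "y1 \<in> I" "phi 0 y0 = y0" "phi 1 y1 = y1" "y1 < y0" and lo: "x \<le> y1"
    and s: "set rest \<subseteq> {0,1}"
  shows "x < fixw I phi (0 # rest)"
proof -
  have pc: "x \<le> phi c x" if "c \<in> {0,1}" for c
  proof (cases "c = 0")
    case True then show ?thesis using fix_ge[OF A _ y(1) _ x, of "[0]"] y lo by simp
  next
    case False then have "c = 1" using that by auto
    then show ?thesis using fix_ge[OF A _ y(2) _ x lo, of "[1]"] y by simp
  qed
  have "phi 0 y0 - phi 0 x < y0 - x" using A2_contr[OF A _ x y(1), of 0] y lo by simp
  then have "x < phi 0 x" using y by simp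
  then have ph: "x < phiw phi (0 # rest) x"
    using stay_above[OF A x pc s A2_in[OF A _ x, of 0]] by simp
  have sw: "set (0 # rest) \<subseteq> {0,1}" using s by simp
  from fixw_prop[OF A sw] have fx: "fixw I phi (0#rest) \<in> I" "phiw phi (0#rest) (fixw I phi (0#rest)) = fixw I phi (0#rest)" by auto
  show ?thesis
  proof (rule ccontr)
    assume "\<not> x < fixw I phi (0 # rest)"
    then have "phiw phi (0#rest) x \<le> x" using fix_le[OF A sw fx x] by simp
    then show False using ph by simp
  qed
qed

lemma E2:
  assumes A: "A2 I phi" and x: "x \<in> I"
    and y: "y0 \<in> I" "y1 \<in> I" "phi 0 y0 = y0" "phi 1 y1 = y1" "y1 < y0" and hi: "y0 \<le> x"
    and s: "set rest \<subseteq> {0,1}"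
  shows "fixw I phi (1 # rest) < x"
proof -
  have pc: "phi c x \<le> x" if "c \<in> {0,1}" for c
  proof (cases "c = 0")
    case True then show ?thesis using fix_le[OF A _ y(1) _ x hi, of "[0]"] y by simp
  next
    case False then have "c = 1" using that by auto
    then show ?thesis using fix_le[OF A _ y(2) _ x, of "[1]"] y hi by simp
  qed
  have "phi 1 x - phi 1 y1 < x - y1" using A2_contr[OF A _ y(2) x, of 1] y hi by simp
  then have "phi 1 x < x" using y by simp
  then have ph: "phiw phi (1 # rest) x < x"
    using stay_below[OF A x pc s A2_in[OF A _ x, of 1]] by simp
  have sw: "set (1 # rest) \<subseteq> {0,1}" using s by simp
  from fixw_prop[OF A sw] have fx: "fixw I phi (1#rest) \<in> I" "phiw phi (1#rest) (fixw I phi (1#rest)) = fixw I phi (1#rest)" by auto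
  show ?thesis
  proof (rule ccontr)
    assume "\<not> fixw I phi (1 # rest) < x"
    then have "x \<le> phiw phi (1#rest) x" using fix_ge[OF A sw fx x] by simp
    then show False using ph by simp
  qed
qed


lemma mid_facts:
  assumes A: "A2 I phi" and x: "x \<in> I" and tw: "threshold_word phi x p"
    and y: "y0 \<in> I" "y1 \<in> I" "phi 0 y0 = y0" "phi 1 y1 = y1" "y1 < y0"
    and m: "y1 < x" "x < y0"
  shows "\<And>k. 1 \<le> k \<Longrightarrow> omega_letter p k = (if x \<le> thr_orbit phi x k then 1 else 0)"
    and "\<And>k. 1 \<le> k \<Longrightarrow> phi 1 x \<le> thr_orbit phi x k \<and> thr_orbit phi x k < phi 0 x"
proof -
  have h0: "z < phi 0 z \<and> phi 0 z < y0" if "z \<in> I" "z < y0" for z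
    using A2_contr[OF A _ that(1) y(1) that(2), of 0] A2_mono[OF A _ that(1) y(1) that(2), of 0] y by simp
  have h1: "phi 1 z < z \<and> y1 < phi 1 z" if "z \<in> I" "y1 < z" for z
    using A2_contr[OF A _ y(2) that(1) that(2), of 1] A2_mono[OF A _ y(2) that(1) that(2), of 1] y by simp
  have inv1: "y1 < thr_orbit phi x k \<and> thr_orbit phi x k < y0" for k
  proof (induction k)
    case 0 then show ?case using m by simp
  next
    case (Suc k)
    then show ?case using h0[OF orbit_in[OF A x, of k]] h1[OF orbit_in[OF A x, of k]] by auto
  qed
  have inv2: "phi 1 x \<le> thr_orbit phi x (Suc k) \<and> thr_orbit phi x (Suc k) < phi 0 x" for k
  proof (induction k)
    case 0 then show ?case using h0[OF x m(2)] h1[OF x m(1)] by simp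
  next
    case (Suc k)
    let ?z = "thr_orbit phi x (Suc k)"
    have zI: "?z \<in> I" using orbit_in[OF A x] .
    show ?case
    proof (cases "x \<le> ?z")
      case True
      have "phi 1 x \<le> phi 1 ?z" using phiw_le[OF A _ x zI True, of "[1]"] by simp
      then show ?thesis using True Suc h1[OF zI] m by simp
    next
      case False
      have "phi 0 ?z < phi 0 x" using A2_mono[OF A _ zI x, of 0] False by simp
      then show ?thesis using False Suc h0[OF zI] inv1[of "Suc k"] by simp
    qed
  qed
  show "phi 1 x \<le> thr_orbit phi x k \<and> thr_orbit phi x k < phi 0 x" if "1 \<le> k" for k
    using inv2[of "k - 1"] that by simp
  show "omega_letter p k = (if x \<le> thr_orbit phi x k then 1 else 0)" if k: "1 \<le> k" for k
  proof -
    let ?z = "thr_orbit phi x k"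
    have zI: "?z \<in> I" using orbit_in[OF A x] .
    have st: "thr_orbit phi x (Suc k) = phi (omega_letter p k) ?z" using tw_step[OF tw k] .
    have l: "omega_letter p k \<in> {0,1}" using tw_letter01[OF tw] .
    have ne: "phi 1 ?z < phi 0 ?z" using h0[OF zI] h1[OF zI] inv1[of k] by auto
    show ?thesis
    proof (cases "x \<le> ?z")
      case True
      then have "phi (omega_letter p k) ?z = phi 1 ?z" using st by simp
      then show ?thesis using True l ne by auto
    next
      case False
      then have "phi (omega_letter p k) ?z = phi 0 ?z" using st by simp
      then show ?thesis using False l ne by auto
    qed
  qed
qed

lemma claim1:
  assumes A: "A2 I phi" and x: "x \<in> I" and n: "n \<ge> 1"
    and hyp: "x \<le> fixw I phi (1 # replicate (n-1) 0)"
    and k: "k \<ge> 1" and run: "\<And>j. j < n \<Longrightarrow> thr_orbit phi x (k+j) < x"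
  shows False
proof -
  let ?xs = "thr_orbit phi x"
  let ?w = "1 # replicate (n-1) (0::nat)"
  have sw: "set ?w \<subseteq> {0,1}" by auto
  from fixw_prop[OF A sw] have fx: "fixw I phi ?w \<in> I" "phiw phi ?w (fixw I phi ?w) = fixw I phi ?w" by auto
  obtain m where m: "m \<le> k - 1" "x \<le> ?xs m" "\<forall>t. m < t \<and> t \<le> k-1 \<longrightarrow> \<not> x \<le> ?xs t"
    using last_before[of "\<lambda>t. x \<le> ?xs t" 0 "k-1"] by auto
  have r: "?xs t < x" if "m < t" "t \<le> m + n" for t
  proof (cases "t \<le> k - 1")
    case True then show ?thesis using m that by auto
  next
    case False then have "t = k + (t - k)" "t - k < n" using that m k by auto
    then show ?thesis using run[of "t-k"] by metis
  qed
  have "?xs (m+1+(n-1)) = phiw phi (replicate (n-1) 0) (?xs (m+1))"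
    by (rule run0[where r="n-1" and j="m+1"]) (use r n in \<open>auto simp del: thr_orbit.simps\<close>)
  moreover have "?xs (m+1) = phi 1 (?xs m)" using m(2) by simp
  ultimately have e: "?xs (m+n) = phiw phi ?w (?xs m)" using n by simp
  have "phiw phi ?w x \<le> phiw phi ?w (?xs m)" using phiw_le[OF A sw x orbit_in[OF A x] m(2)] .
  moreover have "x \<le> phiw phi ?w x" using fix_ge[OF A sw fx x hyp] .
  ultimately show False using r[of "m+n"] n e by simp
qed

lemma claim3:
  assumes A: "A2 I phi" and x: "x \<in> I" and n: "n \<ge> 1"
    and hyp: "fixw I phi (0 # replicate (n-1) 1) \<le> x" and x1: "thr_orbit phi x 1 < x"
    and k: "k \<ge> 1" and run: "\<And>j. j < n \<Longrightarrow> x \<le> thr_orbit phi x (k+j)"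
  shows False
proof -
  let ?xs = "thr_orbit phi x"
  let ?w = "0 # replicate (n-1) (1::nat)"
  have sw: "set ?w \<subseteq> {0,1}" by auto
  from fixw_prop[OF A sw] have fx: "fixw I phi ?w \<in> I" "phiw phi ?w (fixw I phi ?w) = fixw I phi ?w" by auto
  have "k \<noteq> 1" using run[of 0] x1 n by auto
  then have k1: "1 \<le> k - 1" using k by auto
  obtain m where m: "m \<le> k - 1" "?xs m < x" "\<forall>t. m < t \<and> t \<le> k-1 \<longrightarrow> \<not> ?xs t < x"
    using last_before[of "\<lambda>t. ?xs t < x" 1 "k-1"] x1 k1 by auto
  have r: "x \<le> ?xs t" if "m < t" "t \<le> m + n" for t
  proof (cases "t \<le> k - 1")
    case True then show ?thesis using m that by auto
  next
    case False then have "t = k + (t - k)" "t - k < n" using that m k by auto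
    then show ?thesis using run[of "t-k"] by metis
  qed
  have "?xs (m+1+(n-1)) = phiw phi (replicate (n-1) 1) (?xs (m+1))"
    by (rule run1[where r="n-1" and j="m+1"]) (use r n in \<open>auto simp del: thr_orbit.simps\<close>)
  moreover have "?xs (m+1) = phi 0 (?xs m)" using m(2) by simp
  ultimately have e: "?xs (m+n) = phiw phi ?w (?xs m)" using n by simp
  have "phiw phi ?w (?xs m) < phiw phi ?w x" using phiw_mono[OF A sw orbit_in[OF A x] x m(2)] .
  moreover have "phiw phi ?w x \<le> x" using fix_le[OF A sw fx x hyp] .
  ultimately show False using r[of "m+n"] n e by simp
qed

lemma claim2:
  assumes A: "A2 I phi" and x: "x \<in> I" and n: "n \<ge> 1"
    and hyp: "fixw I phi (0 # 1 # replicate (n-1) 0) \<le> x"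
    and a: "x \<le> thr_orbit phi x k" and mid: "\<And>j. 1 \<le> j \<Longrightarrow> j < n \<Longrightarrow> thr_orbit phi x (k+j) < x"
    and e: "x \<le> thr_orbit phi x (k+n)" and inv: "thr_orbit phi x k < phi 0 x"
  shows False
proof -
  let ?xs = "thr_orbit phi x"
  let ?v = "1 # replicate (n-1) (0::nat)"
  let ?w = "0 # ?v"
  have sv: "set ?v \<subseteq> {0,1}" by auto
  have sw: "set ?w \<subseteq> {0,1}" by auto
  from fixw_prop[OF A sw] have fx: "fixw I phi ?w \<in> I" "phiw phi ?w (fixw I phi ?w) = fixw I phi ?w" by auto
  have "?xs (k+1+(n-1)) = phiw phi (replicate (n-1) 0) (?xs (k+1))"
    by (rule run0[where r="n-1" and j="k+1"]) (use mid[of "Suc _"] in \<open>auto simp del: thr_orbit.simps\<close>)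
  moreover have "?xs (k+1) = phi 1 (?xs k)" using a by simp
  ultimately have e2: "?xs (k+n) = phiw phi ?v (?xs k)" using n by simp
  have "phiw phi ?v (?xs k) < phiw phi ?v (phi 0 x)"
    using phiw_mono[OF A sv orbit_in[OF A x] A2_in[OF A _ x] inv] by simp
  moreover have "phiw phi ?w x \<le> x" using fix_le[OF A sw fx x hyp] .
  ultimately show False using e e2 by simp
qed

lemma claim4:
  assumes A: "A2 I phi" and x: "x \<in> I" and n: "n \<ge> 1"
    and hyp: "x \<le> fixw I phi (1 # 0 # replicate (n-1) 1)"
    and a: "thr_orbit phi x k < x" and mid: "\<And>j. 1 \<le> j \<Longrightarrow> j < n \<Longrightarrow> x \<le> thr_orbit phi x (k+j)"
    and e: "thr_orbit phi x (k+n) < x" and inv: "phi 1 x \<le> thr_orbit phi x k"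
  shows False
proof -
  let ?xs = "thr_orbit phi x"
  let ?v = "0 # replicate (n-1) (1::nat)"
  let ?w = "1 # ?v"
  have sv: "set ?v \<subseteq> {0,1}" by auto
  have sw: "set ?w \<subseteq> {0,1}" by auto
  from fixw_prop[OF A sw] have fx: "fixw I phi ?w \<in> I" "phiw phi ?w (fixw I phi ?w) = fixw I phi ?w" by auto
  have "?xs (k+1+(n-1)) = phiw phi (replicate (n-1) 1) (?xs (k+1))"
    by (rule run1[where r="n-1" and j="k+1"]) (use mid[of "Suc _"] in \<open>auto simp del: thr_orbit.simps\<close>)
  moreover have "?xs (k+1) = phi 0 (?xs k)" using a by simp
  ultimately have e2: "?xs (k+n) = phiw phi ?v (?xs k)" using n by simp
  have "phiw phi ?v (phi 1 x) \<le> phiw phi ?v (?xs k)"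
    using phiw_le[OF A sv A2_in[OF A _ x] orbit_in[OF A x] inv] by simp
  moreover have "x \<le> phiw phi ?w x" using fix_ge[OF A sw fx x hyp] .
  ultimately show False using e e2 by simp
qed


lemma no_factor_head: "u \<noteq> [] \<Longrightarrow> u ! 0 \<noteq> c \<Longrightarrow> \<not> factor_omega u [c]"
proof
  assume u: "u \<noteq> []" "u ! 0 \<noteq> c" and "factor_omega u [c]"
  then obtain i where "\<forall>j<length u. u ! j = [c] ! ((i + j) mod length [c])"
    unfolding factor_omega_def by blast
  then have "u ! 0 = c" using u by auto
  then show False using u by simp
qed

theorem mainTheorem6:
  fixes I :: "real set" and phi :: "nat \<Rightarrow> real \<Rightarrow> real" and x :: real
    and p :: "nat list" and n :: nat
  assumes "A2 I phi" and "x \<in> I" and "threshold_word phi x p" and "n \<ge> 1"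
  shows "(x \<le> fixw I phi ([1] @ replicate (n - 1) 0) \<longrightarrow>
            \<not> factor_omega (replicate n 0) p)
       \<and> (x \<ge> fixw I phi ([0, 1] @ replicate (n - 1) 0) \<longrightarrow>
            \<not> factor_omega ([1] @ replicate (n - 1) 0 @ [1]) p)
       \<and> (x \<ge> fixw I phi ([0] @ replicate (n - 1) 1) \<longrightarrow>
            \<not> factor_omega (replicate n 1) p)
       \<and> (x \<le> fixw I phi ([1, 0] @ replicate (n - 1) 1) \<longrightarrow>
            \<not> factor_omega ([0] @ replicate (n - 1) 1 @ [0]) p)"
proof -
  have A: "A2 I phi" and x: "x \<in> I" and tw: "threshold_word phi x p" and n: "n \<ge> 1"
    using assms by auto
  obtain y0 y1 where y: "y0 \<in> I" "y1 \<in> I" "phi 0 y0 = y0" "phi 1 y1 = y1" "y1 < y0"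
    using A2_fix[OF A] by blast
  have pb: "p \<noteq> []" using tw_basic[OF tw] by auto
  have r0: "replicate n (0::nat) \<noteq> [] \<and> replicate n (0::nat) ! 0 = 0" 
    and r1: "replicate n (1::nat) \<noteq> [] \<and> replicate n (1::nat) ! 0 = 1" using n by (cases n; simp)+
  have sA: "set (1 # replicate (n - 1) (0::nat)) \<subseteq> {0,1}" and sB: "set (replicate (n - 1) (1::nat)) \<subseteq> {0,1}"
    and sB': "set (0 # replicate (n - 1) (1::nat)) \<subseteq> {0,1}" and sA': "set (replicate (n - 1) (0::nat)) \<subseteq> {0,1}" by auto
  consider (lo) "x \<le> y1" | (hi) "y0 \<le> x" | (mid) "y1 < x" "x < y0" by linarith
  then show ?thesis
  proof cases
    case lo
    have p: "p = [1]" by (rule lo_word[OF A x tw y(2) y(4) lo])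
    have e: "x < fixw I phi (0 # rest)" if "set rest \<subseteq> {0,1}" for rest
      by (rule E1[OF A x y lo that])
    have e1: "x < fixw I phi (0 # 1 # replicate (n - 1) 0)" using e[OF sA] .
    have e2: "x < fixw I phi (0 # replicate (n - 1) 1)" using e[OF sB] .
    have f1: "\<not> factor_omega (replicate n 0) p" using no_factor_head[of "replicate n 0" 1] r0 p by simp
    have f4: "\<not> factor_omega ([0] @ replicate (n - 1) 1 @ [0]) p" using no_factor_head[of "[0] @ replicate (n - 1) 1 @ [0]" 1] p by simp
    show ?thesis using f1 f4 e1 e2 by simp
  next
    case hi
    have p: "p = [0]" by (rule hi_word[OF A x tw y hi])
    have e: "fixw I phi (1 # rest) < x" if "set rest \<subseteq> {0,1}" for rest
      by (rule E2[OF A x y hi that])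
    have e1: "fixw I phi (1 # replicate (n - 1) 0) < x" using e[OF sA'] .
    have e2: "fixw I phi (1 # 0 # replicate (n - 1) 1) < x" using e[OF sB'] .
    have f2: "\<not> factor_omega (replicate n 1) p" using no_factor_head[of "replicate n 1" 0] r1 p by simp
    have f3: "\<not> factor_omega ([1] @ replicate (n - 1) 0 @ [1]) p" using no_factor_head[of "[1] @ replicate (n - 1) 0 @ [1]" 0] p by simp
    show ?thesis using f2 f3 e1 e2 by simp
  next
    case mid
    note L = mid_facts(1)[OF A x tw y mid]
    note inv = mid_facts(2)[OF A x tw y mid]
    have lt0: "thr_orbit phi x k < x" if "1 \<le> k" "omega_letter p k = 0" for k
    proof (rule ccontr)
      assume "\<not> thr_orbit phi x k < x"
      then have "x \<le> thr_orbit phi x k" by simp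
      then have "omega_letter p k = 1" using L[OF that(1)] by presburger
      then show False using that(2) by simp
    qed
    have lt1: "x \<le> thr_orbit phi x k" if "1 \<le> k" "omega_letter p k = 1" for k
    proof (rule ccontr)
      assume "\<not> x \<le> thr_orbit phi x k"
      then have "omega_letter p k = 0" using L[OF that(1)] by presburger
      then show False using that(2) by simp
    qed
    have "phi 1 x - phi 1 y1 < x - y1" using A2_contr[OF A _ y(2) x mid(1), of 1] by simp
    then have x1: "thr_orbit phi x 1 < x" using y(4) by simp
    show ?thesis
    proof (intro conjI impI)
      assume h: "x \<le> fixw I phi ([1] @ replicate (n - 1) 0)"
      show "\<not> factor_omega (replicate n 0) p"
      proof
        assume "factor_omega (replicate n 0) p"
        from factor_letter[OF this pb] obtain k where k: "k \<ge> 1"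
          "\<forall>j<n. omega_letter p (k+j) = 0" by auto
        show False
        proof (rule claim1[OF A x n _ k(1)])
          show "x \<le> fixw I phi (1 # replicate (n-1) 0)" using h by simp
          show "thr_orbit phi x (k+j) < x" if "j < n" for j using lt0[of "k+j"] k that by simp
        qed
      qed
    next
      assume h: "fixw I phi ([0, 1] @ replicate (n - 1) 0) \<le> x"
      let ?u = "[1] @ replicate (n - 1) 0 @ [1::nat]"
      show "\<not> factor_omega ?u p"
      proof
        assume "factor_omega ?u p"
        from factor_letter[OF this pb] obtain k where k: "k \<ge> 1"
          "\<forall>j<length ?u. omega_letter p (k+j) = ?u ! j" by blast
        have len: "length ?u = n + 1" using n by simp
        have u0: "?u ! 0 = 1" by simp
        have un: "?u ! n = 1" using n by (cases n) (auto simp: nth_append)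
        have uj: "?u ! j = 0" if "1 \<le> j" "j < n" for j using that by (cases j) (auto simp: nth_append)
        show False
        proof (rule claim2[OF A x n _ _ _ _ conjunct2[OF inv[OF k(1)]]])
          show "fixw I phi (0 # 1 # replicate (n - 1) 0) \<le> x" using h by simp
          have o: "omega_letter p (k+j) = ?u ! j" if "j < n+1" for j by (metis k(2) len that)
          show "x \<le> thr_orbit phi x k" using lt1[OF k(1)] o[of 0] u0 by simp
          show "x \<le> thr_orbit phi x (k + n)" using lt1[of "k+n"] k(1) o[of n] un by simp
          show "thr_orbit phi x (k + j) < x" if "1 \<le> j" "j < n" for j
            using lt0[of "k+j"] k(1) o[of j] uj[OF that] that by simp
        qed
      qed
    next
      assume h: "fixw I phi ([0] @ replicate (n - 1) 1) \<le> x"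
      show "\<not> factor_omega (replicate n 1) p"
      proof
        assume "factor_omega (replicate n 1) p"
        from factor_letter[OF this pb] obtain k where k: "k \<ge> 1"
          "\<forall>j<n. omega_letter p (k+j) = 1" by auto
        show False
        proof (rule claim3[OF A x n _ x1 k(1)])
          show "fixw I phi (0 # replicate (n-1) 1) \<le> x" using h by simp
          show "x \<le> thr_orbit phi x (k+j)" if "j < n" for j using lt1[of "k+j"] k that by simp
        qed
      qed
    next
      assume h: "x \<le> fixw I phi ([1, 0] @ replicate (n - 1) 1)"
      let ?u = "[0] @ replicate (n - 1) 1 @ [0::nat]"
      show "\<not> factor_omega ?u p"
      proof
        assume "factor_omega ?u p"
        from factor_letter[OF this pb] obtain k where k: "k \<ge> 1"
          "\<forall>j<length ?u. omega_letter p (k+j) = ?u ! j" by blast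
        have len: "length ?u = n + 1" using n by simp
        have u0: "?u ! 0 = 0" by simp
        have un: "?u ! n = 0" using n by (cases n) (auto simp: nth_append)
        have uj: "?u ! j = 1" if "1 \<le> j" "j < n" for j using that by (cases j) (auto simp: nth_append)
        show False
        proof (rule claim4[OF A x n _ _ _ _ conjunct1[OF inv[OF k(1)]]])
          show "x \<le> fixw I phi (1 # 0 # replicate (n - 1) 1)" using h by simp
          have o: "omega_letter p (k+j) = ?u ! j" if "j < n+1" for j by (metis k(2) len that)
          show "thr_orbit phi x k < x" using lt0[OF k(1)] o[of 0] u0 by simp
          show "thr_orbit phi x (k + n) < x" using lt0[of "k+n"] k(1) o[of n] un by simp
          show "x \<le> thr_orbit phi x (k + j)" if "1 \<le> j" "j < n" for j
            using lt1[of "k+j"] k(1) o[of j] uj[OF that] that by simp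
        qed
      qed
    qed
  qed
qed

end
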